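(* Let $p$ be an odd prime. Let $\mathbf v=(1,\dots,1,0,\dots,0)\in(\mathbb{F}_2)^p$ be the vector whose first $(p+1)/2$ entries are $1$ and last $(p-1)/2$ entries are $0$, and for $i\ge 0$ let $\mathbf v_i$ be the vector obtained from $\mathbf v$ by $i$ cyclic shifts, where a cyclic shift sends $(c_0,c_1,\dots,c_{p-1})$ to $(c_{p-1},c_0,\dots,c_{p-2})$. For $\alpha\in\{1,\dots,p-1\}$ let $A_\alpha$ be the $p\times p$ binary array whose row $i$ ($i=0,\dots,p-1$) is $\mathbf v_r$, where $r\in\{0,\dots,p-1\}$, $r\equiv \alpha i\pmod p$. For binary arrays $A,B$ of the same size and $x,y\in\{0,1\}$, let $|AB|_{(x,y)}$ be the number of cells in which $A$ has entry $x$ and $B$ has entry $y$. Then for all distinct $\alpha,\beta\in\{1,\dots,p-1\}$: (a) $|A_\alpha A_\beta|_{(1,0)}=|A_\alpha A_\beta|_{(0,1)}=(p^2-1)/4$; (b) $|A_\alpha A_\beta|_{(0,0)}=(p-1)^2/4$; (c) $|A_\alpha A_\beta|_{(1,1)}=(p+1)^2/4$. *)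

theory Defs
  imports Main "HOL-Computational_Algebra.Primes"
begin

(* Binary vectors of length p: functions nat \<Rightarrow> bool, entry j meaningful for j < p
   (True = 1, False = 0). *)

definition base_vec :: "nat \<Rightarrow> nat \<Rightarrow> bool" where
  "base_vec p j = (j < (p + 1) div 2)"

definition cyc_shift :: "nat \<Rightarrow> (nat \<Rightarrow> bool) \<Rightarrow> (nat \<Rightarrow> bool)" where
  "cyc_shift p c j = (if j = 0 then c (p - 1) else c (j - 1))"

definition shifted_vec :: "nat \<Rightarrow> nat \<Rightarrow> nat \<Rightarrow> bool" where
  "shifted_vec p i = (cyc_shift p ^^ i) (base_vec p)"

definition arr :: "nat \<Rightarrow> nat \<Rightarrow> nat \<Rightarrow> nat \<Rightarrow> bool" where
  "arr p \<alpha> i j = shifted_vec p ((\<alpha> * i) mod p) j"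

definition pair_count :: "nat \<Rightarrow> (nat \<Rightarrow> nat \<Rightarrow> bool) \<Rightarrow> (nat \<Rightarrow> nat \<Rightarrow> bool) \<Rightarrow> bool \<Rightarrow> bool \<Rightarrow> nat" where
  "pair_count p A B x y = card {(i, j). i < p \<and> j < p \<and> A i j = x \<and> B i j = y}"

end

theory Submission
  imports Defs
begin

lemma shifted_eq:
  assumes "0 < p"
  shows "j < p \<Longrightarrow> shifted_vec p i j = base_vec p (nat ((int j - int i) mod int p))"
proof (induction i arbitrary: j)
  case 0
  then show ?case by (simp add: shifted_vec_def)
next
  case (Suc i)
  have eq: "shifted_vec p (Suc i) = cyc_shift p (shifted_vec p i)"
    by (simp add: shifted_vec_def)
  show ?case
  proof (cases "j = 0")
    case True
    have "shifted_vec p i (p - 1) = base_vec p (nat ((int (p-1) - int i) mod int p))"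
      using Suc.IH assms by simp
    moreover have "(int (p-1) - int i) mod int p = (int j - int (Suc i)) mod int p"
    proof -
      have "int (p-1) - int i = (int j - int (Suc i)) + int p" using True assms by simp
      then show ?thesis by (metis mod_add_self2)
    qed
    ultimately show ?thesis using True eq by (simp add: cyc_shift_def)
  next
    case False
    have "shifted_vec p i (j - 1) = base_vec p (nat ((int (j-1) - int i) mod int p))"
      using Suc.IH Suc.prems by simp
    moreover have "int (j-1) - int i = int j - int (Suc i)" using False by simp
    ultimately show ?thesis using False eq by (simp add: cyc_shift_def diff_diff_eq)
  qed
qed

lemma arr_eq:
  assumes "0 < p" "j < p"
  shows "arr p a i j = base_vec p (nat ((int j - int a * int i) mod int p))"
proof -
  have "arr p a i j = base_vec p (nat ((int j - int ((a * i) mod p)) mod int p))"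
    using shifted_eq[OF assms(1) assms(2)] by (simp add: arr_def)
  also have "(int j - int ((a * i) mod p)) mod int p = (int j - int a * int i) mod int p"
    by (simp add: of_nat_mod mod_diff_right_eq)
  finally show ?thesis .
qed

definition FF :: "nat \<Rightarrow> nat \<Rightarrow> nat \<Rightarrow> nat \<times> nat \<Rightarrow> nat \<times> nat" where
  "FF p a b z = (nat ((int (snd z) - int a * int (fst z)) mod int p),
                 nat ((int (snd z) - int b * int (fst z)) mod int p))"

lemma FF_inj:
  assumes "prime p" "a \<in> {1..p-1}" "b \<in> {1..p-1}" "a \<noteq> b"
  shows "inj_on (FF p a b) ({0..<p} \<times> {0..<p})"
proof (rule inj_onI)
  fix z w assume z: "z \<in> {0..<p} \<times> {0..<p}" and w: "w \<in> {0..<p} \<times> {0..<p}"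
    and e: "FF p a b z = FF p a b w"
  obtain i j where zz: "z = (i, j)" by force
  obtain i' j' where ww: "w = (i', j')" by force
  have p0: "0 < p" using assms(1) prime_gt_0_nat by blast
  have ij: "i < p" "j < p" "i' < p" "j' < p" using z w zz ww by auto
  have e1: "(int j - int a * int i) mod int p = (int j' - int a * int i') mod int p"
    using e zz ww p0 unfolding FF_def
    by (metis (no_types, lifting) eq_nat_nat_iff fst_conv of_nat_0_less_iff pos_mod_sign snd_conv)
  have e2: "(int j - int b * int i) mod int p = (int j' - int b * int i') mod int p"
    using e zz ww p0 unfolding FF_def
    by (metis (no_types, lifting) eq_nat_nat_iff of_nat_0_less_iff pos_mod_sign snd_conv fst_conv)
  have d1: "int p dvd (int j - int a * int i) - (int j' - int a * int i')"
    using e1 by (simp add: mod_eq_dvd_iff)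
  have d2: "int p dvd (int j - int b * int i) - (int j' - int b * int i')"
    using e2 by (simp add: mod_eq_dvd_iff)
  have "int p dvd ((int j - int b * int i) - (int j' - int b * int i'))
         - ((int j - int a * int i) - (int j' - int a * int i'))"
    using d1 d2 by (rule dvd_diff[rotated])
  moreover have "((int j - int b * int i) - (int j' - int b * int i'))
         - ((int j - int a * int i) - (int j' - int a * int i'))
         = (int a - int b) * (int i - int i')" by (simp add: algebra_simps)
  ultimately have d3: "int p dvd (int a - int b) * (int i - int i')" by simp
  have pi: "prime (int p)" using assms(1) by simp
  have nab: "\<not> int p dvd (int a - int b)"
  proof
    assume "int p dvd (int a - int b)"
    moreover have "int a - int b \<noteq> 0" using assms(4) by simp
    ultimately have "\<bar>int p\<bar> \<le> \<bar>int a - int b\<bar>" using dvd_imp_le_int by blast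
    moreover have "\<bar>int a - int b\<bar> < int p" using assms(2,3) by auto
    ultimately show False by simp
  qed
  have "int p dvd (int i - int i')" using d3 nab pi prime_dvd_mult_iff by blast
  then have ii: "i = i'"
  proof -
    assume h: "int p dvd (int i - int i')"
    show "i = i'"
    proof (rule ccontr)
      assume "i \<noteq> i'"
      then have "int i - int i' \<noteq> 0" by simp
      then have "\<bar>int p\<bar> \<le> \<bar>int i - int i'\<bar>" using dvd_imp_le_int h by blast
      moreover have "\<bar>int i - int i'\<bar> < int p" using ij by auto
      ultimately show False by simp
    qed
  qed
  have "int p dvd (int j - int j')" using d1 ii by (simp add: algebra_simps)
  then have jj: "j = j'"
  proof -
    assume h: "int p dvd (int j - int j')"
    show "j = j'"
    proof (rule ccontr)
      assume "j \<noteq> j'"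
      then have "int j - int j' \<noteq> 0" by simp
      then have "\<bar>int p\<bar> \<le> \<bar>int j - int j'\<bar>" using dvd_imp_le_int h by blast
      moreover have "\<bar>int j - int j'\<bar> < int p" using ij by auto
      ultimately show False by simp
    qed
  qed
  show "z = w" using zz ww ii jj by simp
qed

lemma FF_image:
  assumes "prime p" "a \<in> {1..p-1}" "b \<in> {1..p-1}" "a \<noteq> b"
  shows "FF p a b ` ({0..<p} \<times> {0..<p}) = {0..<p} \<times> {0..<p}"
proof (rule card_subset_eq)
  have p0: "0 < p" using assms(1) prime_gt_0_nat by blast
  show "finite ({0..<p} \<times> {0..<p})" by simp
  show "FF p a b ` ({0..<p} \<times> {0..<p}) \<subseteq> {0..<p} \<times> {0..<p}"
  proof
    fix w assume "w \<in> FF p a b ` ({0..<p} \<times> {0..<p})"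
    then obtain z where "w = FF p a b z" by blast
    then show "w \<in> {0..<p} \<times> {0..<p}" using p0 unfolding FF_def
      by (auto simp: nat_less_iff)
  qed
  show "card (FF p a b ` ({0..<p} \<times> {0..<p})) = card ({0..<p} \<times> {0..<p})"
    using FF_inj[OF assms] card_image by blast
qed

lemma count_gen:
  assumes "prime p" "a \<in> {1..p-1}" "b \<in> {1..p-1}" "a \<noteq> b"
  shows "pair_count p (arr p a) (arr p b) x y
       = card {k. k < p \<and> base_vec p k = x} * card {l. l < p \<and> base_vec p l = y}"
proof -
  have p0: "0 < p" using assms(1) prime_gt_0_nat by blast
  let ?D = "{0..<p} \<times> {0..<p}"
  let ?S = "{(i, j). i < p \<and> j < p \<and> arr p a i j = x \<and> arr p b i j = y}"
  let ?P = "\<lambda>w. base_vec p (fst w) = x \<and> base_vec p (snd w) = y"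
  have S: "?S = {z \<in> ?D. ?P (FF p a b z)}"
  proof -
    have k: "\<And>i j. i < p \<Longrightarrow> j < p \<Longrightarrow> arr p a i j = base_vec p (fst (FF p a b (i, j)))
        \<and> arr p b i j = base_vec p (snd (FF p a b (i, j)))"
      using p0 by (simp add: arr_eq FF_def)
    show ?thesis
    proof (intro set_eqI iffI)
      fix z assume z: "z \<in> ?S"
      obtain i j where ij: "z = (i, j)" by force
      have "i < p" "j < p" "arr p a i j = x" "arr p b i j = y" using z unfolding ij by (simp_all only: mem_Collect_eq prod.case)
      then show "z \<in> {z \<in> ?D. ?P (FF p a b z)}" using k[of i j] ij by auto
    next
      fix z assume z: "z \<in> {z \<in> ?D. ?P (FF p a b z)}"
      obtain i j where ij: "z = (i, j)" by force
      have "i < p" "j < p" "?P (FF p a b (i, j))" using z unfolding ij by (simp_all only: mem_Collect_eq mem_Sigma_iff atLeastLessThan_iff)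
      then show "z \<in> ?S" using k[of i j] ij by auto
    qed
  qed
  let ?T = "{z \<in> ?D. ?P (FF p a b z)}"
  have inj: "inj_on (FF p a b) ?T"
    using FF_inj[OF assms] by (rule inj_on_subset) blast
  have img: "FF p a b ` ?T = {w \<in> ?D. ?P w}"
  proof
    show "FF p a b ` ?T \<subseteq> {w \<in> ?D. ?P w}"
    proof
      fix w assume "w \<in> FF p a b ` ?T"
      then obtain z where z: "z \<in> ?D" "?P (FF p a b z)" "w = FF p a b z" by blast
      have "w \<in> ?D" using z(1,3) FF_image[OF assms] by blast
      then have "w \<in> ?D \<and> ?P w" using z(2,3) by metis
      then show "w \<in> {w \<in> ?D. ?P w}" by (rule CollectI)
    qed
  next
    show "{w \<in> ?D. ?P w} \<subseteq> FF p a b ` ?T"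
    proof
      fix w assume w: "w \<in> {w \<in> ?D. ?P w}"
      then have "w \<in> FF p a b ` ?D" using FF_image[OF assms] by blast
      then obtain z where "z \<in> ?D" "w = FF p a b z" by blast
      then show "w \<in> FF p a b ` ?T" using w by blast
    qed
  qed
  have C: "{w \<in> ?D. ?P w} = {k. k < p \<and> base_vec p k = x} \<times> {l. l < p \<and> base_vec p l = y}"
    by auto
  have "card ?S = card ?T" using S by (rule arg_cong)
  also have "\<dots> = card (FF p a b ` ?T)" using card_image[OF inj] by (rule sym)
  also have "\<dots> = card ({k. k < p \<and> base_vec p k = x} \<times> {l. l < p \<and> base_vec p l = y})"
    unfolding img C by (rule refl)
  finally show ?thesis unfolding pair_count_def by (simp only: card_cartesian_product)
qed

lemma card_T:
  assumes "odd p"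
  shows "card {k. k < p \<and> base_vec p k = True} = (p + 1) div 2"
proof -
  obtain m where m: "p = 2 * m + 1" using assms oddE by blast
  have "{k. k < p \<and> base_vec p k = True} = {..<(p + 1) div 2}"
    using m by (auto simp: base_vec_def)
  then show ?thesis by simp
qed

lemma card_F:
  assumes "odd p"
  shows "card {k. k < p \<and> base_vec p k = False} = (p - 1) div 2"
proof -
  obtain m where m: "p = 2 * m + 1" using assms oddE by blast
  have "{k. k < p \<and> base_vec p k = False} = {(p + 1) div 2..<p}"
    using m by (auto simp: base_vec_def)
  then show ?thesis using assms by simp
qed

theorem mainTheorem15:
  fixes p \<alpha> \<beta> :: nat
  assumes "prime p" and "odd p"
    and "\<alpha> \<in> {1..p-1}" and "\<beta> \<in> {1..p-1}" and "\<alpha> \<noteq> \<beta>"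
  shows "pair_count p (arr p \<alpha>) (arr p \<beta>) True False = (p^2 - 1) div 4
       \<and> pair_count p (arr p \<alpha>) (arr p \<beta>) False True = (p^2 - 1) div 4
       \<and> pair_count p (arr p \<alpha>) (arr p \<beta>) False False = (p - 1)^2 div 4
       \<and> pair_count p (arr p \<alpha>) (arr p \<beta>) True True = (p + 1)^2 div 4"
proof -
  obtain m where m: "p = 2 * m + 1" using assms(2) oddE by blast
  have h1: "(p + 1) div 2 = m + 1" using m by simp
  have h2: "(p - 1) div 2 = m" using m by simp
  have a1: "(p^2 - 1) div 4 = (m + 1) * m" using m by (simp add: power2_eq_square algebra_simps)
  have a2: "(p - 1)^2 div 4 = m * m" using m by (simp add: power2_eq_square algebra_simps)
  have a3: "(p + 1)^2 div 4 = (m + 1) * (m + 1)" using m by (simp add: power2_eq_square algebra_simps)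
  note cg = count_gen[OF assms(1,3,4,5)]
  show ?thesis
    using cg card_T[OF assms(2)] card_F[OF assms(2)] h1 h2 a1 a2 a3 by (simp add: mult.commute)
qed

end
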